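(* Consider the input-output system $\dot{\mathbf x}=\mathbf f(\mathbf x)+\hat{\mathbf e}_1 g(u,x_1)$, $u\in J$, satisfying assumption (A0), with output $x_j$ where $j\neq 1$, and let $G$ be its J-graph. (1) If $G$ has no input-output path, then the steady-state response $x_j^*(u)$ is independent of $u$. (2) Suppose $G$ has an input-output path. If $G$ has neither an incoherent feedforward loop from input $x_1$ to output $x_j$, nor a positive feedback loop that is vertex-disjoint from some input-output path, then the system is not quasi-adaptive and does not exhibit biphasic response.
   Context: $\mathcal X\subset\mathbb R^n$, $J\subset\mathbb R$ an interval, $\mathbf f:\mathcal X\to\mathbb R^n$ is $C^1$, every entry $\partial f_i/\partial x_k$ has constant sign (positive, negative, or identically zero) on $\mathcal X$, and $\partial f_i/\partial x_i<0$. $\hat{\mathbf e}_1$ is the first standard basis vector. The control term $g$ is one of: flow, $g(u,x_1)=u$; activation, $g(u,x_1)=(u+k_{\mathrm{on}})(x_T-x_1)-k_{\mathrm{off}}x_1$; inhibition, $g(u,x_1)=k_{\mathrm{on}}(x_T-x_1)-(u+k_{\mathrm{off}})x_1$, with constants $x_T,k_{\mathrm{on}},k_{\mathrm{off}}>0$; in the activation and inhibition cases the state space satisfies $0\le x_1\le x_T$ and every steady state has $0<x_1<x_T$. Write $\mathbf F(\mathbf x,u)=\mathbf f(\mathbf x)+\hat{\mathbf e}_1g(u,x_1)$. Assumption (A0): for every $u_0\in J$ there is $\mathbf x_0\in\mathcal X$ with $\mathbf F(\mathbf x_0,u_0)=\mathbf 0$ and $\frac{\partial\mathbf F}{\partial\mathbf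 x}(\mathbf x_0,u_0)$ of full rank; by the implicit function theorem this gives continuously differentiable steady-state curves $\mathbf x^*(u)$. The system is quasi-adaptive if, along such a curve, $\partial_u x_j^*(u_0)=0$ for some $u_0\in J$, and exhibits biphasic response if $\partial_u x_j^*(u_1)\,\partial_u x_j^*(u_2)<0$ for some $u_1,u_2\in J$. The J-graph of $\frac{\partial\mathbf f}{\partial\mathbf x}$ is the signed directed graph on nodes $x_1,\ldots,x_n$ with a positive (resp. negative) edge from $x_i$ to $x_k$ iff $\partial f_k/\partial x_i>0$ (resp. $<0$); every node has a negative self-loop. The J-graph $G$ of the input-output system is this graph together with an input edge into $x_1$ (from an external source for flow, or from an extra node $C$ representing the control, positive for activation, negative for inhibition) and an outgoing output edge from $x_j$. A path is a walk without repeated vertices except possibly first = last, in which case it is a cycle; its sign is the product of its edge signs. An input-output path is a path from $x_1$ to $x_j$. A feedback loop is a cycle of length at least two, positive if its sign is positive. An incoherent feedforward loop from $x_1$ to $x_j$ is a pair of distinct paths from $x_1$ to $x_j$ with opposite signs. *)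

theory Defs
  imports "HOL-Analysis.Analysis"
begin

datatype control = Flow | Activation | Inhibition

definition gctl :: "control \<Rightarrow> real \<Rightarrow> real \<Rightarrow> real \<Rightarrow> real \<Rightarrow> real \<Rightarrow> real" where
  "gctl c xT kon koff u x1 =
     (case c of
        Flow \<Rightarrow> u
      | Activation \<Rightarrow> (u + kon) * (xT - x1) - koff * x1
      | Inhibition \<Rightarrow> kon * (xT - x1) - (u + koff) * x1)"

definition dgctl_dx1 :: "control \<Rightarrow> real \<Rightarrow> real \<Rightarrow> real \<Rightarrow> real \<Rightarrow> real" where
  "dgctl_dx1 c xT kon koff u =
     (case c of
        Flow \<Rightarrow> 0
      | Activation \<Rightarrow> - (u + kon) - koff
      | Inhibition \<Rightarrow> - kon - (u + koff))"

text \<open>Vector field F(x,u) = f(x) + e_1 g(u, x_1); the index i1 plays the role of coordinate 1.\<close>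
definition Fsys :: "(real^'n \<Rightarrow> real^'n) \<Rightarrow> control \<Rightarrow> real \<Rightarrow> real \<Rightarrow> real \<Rightarrow> 'n
                    \<Rightarrow> real^'n \<Rightarrow> real \<Rightarrow> real^'n" where
  "Fsys f c xT kon koff i1 x u = f x + axis i1 (gctl c xT kon koff u (x $ i1))"

text \<open>Jacobian dF/dx(x,u) = Df(x) + e_1 e_1^T dg/dx1. Rows are components: (M $ i $ k) = dF_i/dx_k.\<close>
definition DFsys :: "(real^'n \<Rightarrow> real^'n^'n) \<Rightarrow> control \<Rightarrow> real \<Rightarrow> real \<Rightarrow> real \<Rightarrow> 'n
                    \<Rightarrow> real^'n \<Rightarrow> real \<Rightarrow> real^'n^'n" where
  "DFsys Df c xT kon koff i1 x u =
     Df x + (\<chi> i k. if i = i1 \<and> k = i1 then dgctl_dx1 c xT kon koff u else 0)"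

text \<open>Sign of the J-graph edge from node a to node b: sign of df_b/dx_a (constant on X by assumption).\<close>
definition edge_sign :: "(real^'n \<Rightarrow> real^'n^'n) \<Rightarrow> (real^'n) set \<Rightarrow> 'n \<Rightarrow> 'n \<Rightarrow> real" where
  "edge_sign Df X a b =
     (if \<exists>x\<in>X. Df x $ b $ a > 0 then 1
      else if \<exists>x\<in>X. Df x $ b $ a < 0 then -1 else 0)"

definition edges_present :: "('n \<Rightarrow> 'n \<Rightarrow> real) \<Rightarrow> 'n list \<Rightarrow> bool" where
  "edges_present E vs = (\<forall>i. Suc i < length vs \<longrightarrow> E (vs ! i) (vs ! Suc i) \<noteq> 0)"

definition walk_sign :: "('n \<Rightarrow> 'n \<Rightarrow> real) \<Rightarrow> 'n list \<Rightarrow> real" where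
  "walk_sign E vs = prod_list (map (\<lambda>(a, b). E a b) (zip vs (tl vs)))"

definition is_path :: "('n \<Rightarrow> 'n \<Rightarrow> real) \<Rightarrow> 'n \<Rightarrow> 'n \<Rightarrow> 'n list \<Rightarrow> bool" where
  "is_path E a b vs = (vs \<noteq> [] \<and> hd vs = a \<and> last vs = b \<and> distinct vs \<and> edges_present E vs)"

definition path_sign :: "('n \<Rightarrow> 'n \<Rightarrow> real) \<Rightarrow> 'n list \<Rightarrow> real" where
  "path_sign E vs = walk_sign E vs"

definition is_feedback_loop :: "('n \<Rightarrow> 'n \<Rightarrow> real) \<Rightarrow> 'n list \<Rightarrow> bool" where
  "is_feedback_loop E vs = (length vs \<ge> 2 \<and> distinct vs \<and> edges_present E vs
                            \<and> E (last vs) (hd vs) \<noteq> 0)"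

definition cycle_sign :: "('n \<Rightarrow> 'n \<Rightarrow> real) \<Rightarrow> 'n list \<Rightarrow> real" where
  "cycle_sign E vs = walk_sign E vs * E (last vs) (hd vs)"

definition has_io_path :: "('n \<Rightarrow> 'n \<Rightarrow> real) \<Rightarrow> 'n \<Rightarrow> 'n \<Rightarrow> bool" where
  "has_io_path E a b = (\<exists>p. is_path E a b p)"

definition has_IFFL :: "('n \<Rightarrow> 'n \<Rightarrow> real) \<Rightarrow> 'n \<Rightarrow> 'n \<Rightarrow> bool" where
  "has_IFFL E a b = (\<exists>p q. is_path E a b p \<and> is_path E a b q \<and> p \<noteq> q
                          \<and> path_sign E p = - path_sign E q)"

definition has_pos_loop_disjoint_from_io_path :: "('n \<Rightarrow> 'n \<Rightarrow> real) \<Rightarrow> 'n \<Rightarrow> 'n \<Rightarrow> bool" where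
  "has_pos_loop_disjoint_from_io_path E a b =
     (\<exists>c p. is_feedback_loop E c \<and> cycle_sign E c > 0 \<and> is_path E a b p \<and> set c \<inter> set p = {})"

definition ss_curve :: "(real^'n \<Rightarrow> real \<Rightarrow> real^'n) \<Rightarrow> (real^'n \<Rightarrow> real \<Rightarrow> real^'n^'n)
                        \<Rightarrow> (real^'n) set \<Rightarrow> real set \<Rightarrow> (real \<Rightarrow> real^'n) \<Rightarrow> (real \<Rightarrow> real^'n) \<Rightarrow> bool" where
  "ss_curve F DF X I xs xs' =
     (is_interval I \<and> (\<exists>a\<in>I. \<exists>b\<in>I. a < b) \<and>
      (\<forall>u\<in>I. xs u \<in> X \<and> F (xs u) u = 0 \<and> rank (DF (xs u) u) = CARD('n)
               \<and> (xs has_vector_derivative xs' u) (at u within I)) \<and>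
      continuous_on I xs')"

definition quasi_adaptive_on :: "real set \<Rightarrow> (real \<Rightarrow> real^'n) \<Rightarrow> 'n \<Rightarrow> bool" where
  "quasi_adaptive_on I xs' j = (\<exists>u0\<in>I. xs' u0 $ j = 0)"

definition biphasic_on :: "real set \<Rightarrow> (real \<Rightarrow> real^'n) \<Rightarrow> 'n \<Rightarrow> bool" where
  "biphasic_on I xs' j = (\<exists>u1\<in>I. \<exists>u2\<in>I. xs' u1 $ j * xs' u2 $ j < 0)"

end

theory Submission
  imports Defs "HOL-Combinatorics.Cycles" "HOL-Combinatorics.Orbits"
begin

lemma sign_cycle_of_list:
  "distinct cs \<Longrightarrow> sign (cycle_of_list cs) = (-1) ^ (length cs - 1)"
proof (induction cs rule: cycle_of_list.induct)
  case (1 i j cs)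
  have "sign (cycle_of_list (i # j # cs)) = sign (Transposition.transpose i j) * sign (cycle_of_list (j # cs))"
    by (simp add: sign_compose permutation_swap_id permutation_of_cycle)
  also have "\<dots> = - ((-1) ^ (length cs))" using 1 by (simp add: sign_swap_id)
  finally show ?case by (simp del: cycle_of_list.simps)
qed auto

lemma walk_prod:
  assumes "\<forall>m. Suc m < length cs \<longrightarrow> cs ! Suc m = p (cs ! m)"
  shows "prod_list (map (\<lambda>(a, b). w a b) (zip cs (tl cs))) = prod_list (map (\<lambda>x. w x (p x)) (butlast cs))"
  using assms
proof (induction cs)
  case Nil then show ?case by simp
next
  case (Cons a rest)
  show ?case
  proof (cases rest)
    case Nil then show ?thesis by simp
  next
    case (Cons b r)
    have b: "b = p a" using Cons.prems Cons by (metis length_Cons nth_Cons_0 nth_Cons_Suc zero_less_Suc Suc_less_eq)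
    have "\<forall>m. Suc m < length rest \<longrightarrow> rest ! Suc m = p (rest ! m)"
      using Cons.prems by (metis Suc_less_eq length_Cons nth_Cons_Suc)
    with Cons.IH have ih: "prod_list (map (\<lambda>(a, b). w a b) (zip rest (tl rest))) = prod_list (map (\<lambda>x. w x (p x)) (butlast rest))" by blast
    show ?thesis using ih b Cons by simp
  qed
qed

lemma set_butlast_distinct:
  "distinct xs \<Longrightarrow> xs \<noteq> [] \<Longrightarrow> set (butlast xs) = set xs - {last xs}"
proof -
  assume d: "distinct xs" and ne: "xs \<noteq> []"
  have e: "xs = butlast xs @ [last xs]" using ne by simp
  have "distinct (butlast xs @ [last xs])" using d e by simp
  then have "last xs \<notin> set (butlast xs)" by simp
  moreover have "set xs = insert (last xs) (set (butlast xs))" by (subst e) auto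
  ultimately show ?thesis by auto
qed

lemma prod_sgn_real: "(\<Prod>x\<in>S. sgn (f x :: real)) = sgn (\<Prod>x\<in>S. f x)"
proof (cases "finite S")
  case True then show ?thesis by (induction S rule: finite_induct) (auto simp: sgn_mult)
qed simp

lemma perm_decomp:
  fixes p :: "'a \<Rightarrow> 'a"
  assumes pB: "p permutes B" and fin: "finite B" and sB: "s \<in> B"
  defines "cs \<equiv> map (\<lambda>i. (p ^^ i) s) [0..< least_power p s]"
  defines "p' \<equiv> perm_restrict p (B - set cs)"
  shows "set cs \<subseteq> B" "p' permutes (B - set cs)"
    "sign p = sign p' * (-1) ^ (length cs - 1)"
    "distinct cs" "cs \<noteq> []" "hd cs = s" "s \<in> set cs"
    "\<forall>m. Suc m < length cs \<longrightarrow> cs ! Suc m = p (cs ! m)"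
    "p (last cs) = s"
    "(length cs = 1) = (p s = s)"
    "\<forall>x\<in>set cs. p' x = x" "\<forall>x\<in>B - set cs. p' x = p x"
    "\<forall>x\<in>set cs. p x \<in> set cs"
proof -
  have perm: "permutation p" using pB fin permutation_permutes by blast
  note lp = least_power_of_permutation[OF perm]
  have setcs: "set cs = orbit p s"
    unfolding cs_def support_set[OF perm] orbit_altdef_permutation[OF perm] by auto
  have cyc: "cyclic_on p (set cs)" unfolding setcs using cyclic_on_orbit[OF pB fin] .
  show sub: "set cs \<subseteq> B" unfolding setcs using permutes_orbit_subset[OF pB sB] .
  show pp: "p' permutes (B - set cs)" unfolding p'_def
    using perm_restrict_diff_cyclic[OF pB cyc] .
  show dist: "distinct cs" unfolding cs_def using cycle_of_permutation[OF perm] .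
  have len: "length cs = least_power p s" unfolding cs_def by simp
  show ne: "cs \<noteq> []" using lp(2)[of s] len by (metis less_irrefl list.size(3))
  have nth: "\<And>m. m < length cs \<Longrightarrow> cs ! m = (p ^^ m) s" unfolding cs_def by simp
  show "hd cs = s" using nth[of 0] ne by (simp add: hd_conv_nth)
  then show "s \<in> set cs" using ne by auto
  show "\<forall>m. Suc m < length cs \<longrightarrow> cs ! Suc m = p (cs ! m)" using nth by simp
  have "last cs = (p ^^ (length cs - 1)) s" using nth ne by (simp add: last_conv_nth)
  then show "p (last cs) = s" using lp len
    by (metis Suc_diff_1 funpow.simps(2) o_apply)
  show "(length cs = 1) = (p s = s)"
  proof
    assume l1: "length cs = 1"
    have "(p ^^ length cs) s = s" using lp(1) len by simp
    then show "p s = s" using l1 by simp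
  next
    assume "p s = s"
    then have "least_power p s \<le> 1" using least_power_le[where f=p and n=1 and x=s] by simp
    then show "length cs = 1" using len lp(2)[of s] by linarith
  qed
  show fix1: "\<forall>x\<in>set cs. p' x = x" unfolding p'_def by (auto simp: perm_restrict_def)
  show "\<forall>x\<in>B - set cs. p' x = p x" unfolding p'_def by (auto simp: perm_restrict_def)
  show "\<forall>x\<in>set cs. p x \<in> set cs" using cyc cyclic_on_inI by fast
  have c_eq: "perm_restrict p (set cs) = cycle_of_list cs"
  proof
    fix x show "perm_restrict p (set cs) x = cycle_of_list cs x"
      by (cases "x \<in> set cs") (auto simp: perm_restrict_def cs_def cycle_restrict[OF perm] id_outside_supp)
  qed
  have "p = p' \<circ> perm_restrict p (set cs)"
  proof -
    have "perm_restrict p (B - set cs) \<circ> perm_restrict p (set cs) = perm_restrict p ((B - set cs) \<union> set cs)"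
      by (rule perm_restrict_comp[OF _ cyc]) auto
    also have "(B - set cs) \<union> set cs = B" using sub by auto
    finally show ?thesis using perm_restrict_id[OF pB] unfolding p'_def by (simp add: comp_def)
  qed
  then have "sign p = sign p' * sign (cycle_of_list cs)"
    using c_eq sign_compose permutation_of_cycle pp fin
    by (metis finite_Diff permutation_permutes)
  then show "sign p = sign p' * (-1) ^ (length cs - 1)" using sign_cycle_of_list[OF dist] by simp
qed

lemma neg1_sq: "((-1::real) ^ n) * (-1) ^ n = 1"
  by (induction n) auto

lemma sgn_self_abs: "sgn (x::real) * x = \<bar>x\<bar>"
  by (auto simp: sgn_if)

lemma cover_sign:
  fixes A :: "real^'n^'n" and E :: "'n \<Rightarrow> 'n \<Rightarrow> real" and B :: "'n set"
  assumes Hs: "\<And>a b. a \<noteq> b \<Longrightarrow> E a b = sgn (A$b$a)"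
  shows "p permutes B \<Longrightarrow> (\<forall>i\<in>B. A$i$i < 0)
    \<Longrightarrow> (\<forall>c. is_feedback_loop E c \<and> set c \<subseteq> B \<longrightarrow> cycle_sign E c \<le> 0)
    \<Longrightarrow> 0 \<le> (-1) ^ card B * (of_int (sign p) * (\<Prod>i\<in>B. A$(p i)$i))"
  using finite[of B]
proof (induction B arbitrary: p rule: finite_psubset_induct)
  case (psubset B)
  show ?case
  proof (cases "B = {}")
    case True
    then have "p = id" using psubset.prems(1) by (simp add: permutes_empty)
    then show ?thesis using True by simp
  next
    case False
    then obtain s where sB: "s \<in> B" by auto
    have finB: "finite B" by simp
    define cs where "cs = map (\<lambda>i. (p ^^ i) s) [0..< least_power p s]"
    define p' where "p' = perm_restrict p (B - set cs)"
    note D = perm_decomp[OF psubset.prems(1) finB sB, folded cs_def, folded p'_def]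
    define C where "C = set cs"
    define B' where "B' = B - C"
    have CB: "C \<subseteq> B" using D(1) C_def by simp
    have psub: "B' \<subset> B" using D(7) sB CB unfolding B'_def C_def by auto
    have IH: "0 \<le> (-1) ^ card B' * (of_int (sign p') * (\<Prod>i\<in>B'. A$(p' i)$i))"
    proof (rule psubset.IH[OF psub])
      show "p' permutes B'" using D(2) unfolding B'_def C_def .
      show "\<forall>i\<in>B'. A $ i $ i < 0" using psubset.prems(2) B'_def by auto
      show "\<forall>c. is_feedback_loop E c \<and> set c \<subseteq> B' \<longrightarrow> cycle_sign E c \<le> 0"
        using psubset.prems(3) B'_def by auto
    qed
    have split: "(\<Prod>i\<in>B. A$(p i)$i) = (\<Prod>i\<in>C. A$(p i)$i) * (\<Prod>i\<in>B'. A$(p' i)$i)"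
    proof -
      have "(\<Prod>i\<in>B. A$(p i)$i) = (\<Prod>i\<in>B'. A$(p i)$i) * (\<Prod>i\<in>C. A$(p i)$i)"
        unfolding B'_def by (rule prod.subset_diff[OF CB finB])
      moreover have "(\<Prod>i\<in>B'. A$(p i)$i) = (\<Prod>i\<in>B'. A$(p' i)$i)"
        using D(12) unfolding B'_def C_def by (intro prod.cong) auto
      ultimately show ?thesis by simp
    qed
    have cardB: "card B = card B' + length cs"
      using card_Diff_subset[OF _ CB] CB finB distinct_card[OF D(4)] card_mono[OF finB CB]
      unfolding B'_def C_def by (metis finite_subset le_add_diff_inverse2)
    have Q: "(\<Prod>i\<in>C. A$(p i)$i) \<le> 0"
    proof (cases "length cs = 1")
      case True
      then have ps: "p s = s" using D(10) by simp
      have "cs = [s]" using True D(5) D(6)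
        by (metis One_nat_def hd_Cons_tl length_0_conv length_tl diff_Suc_1)
      then show ?thesis using ps psubset.prems(2) sB C_def by (simp add: less_imp_le)
    next
      case False
      then have len2: "length cs \<ge> 2" using D(5) by (cases cs) (auto simp: Suc_le_eq)
      show ?thesis
      proof (rule ccontr)
        assume "\<not> (\<Prod>i\<in>C. A$(p i)$i) \<le> 0"
        then have Qpos: "(\<Prod>i\<in>C. A$(p i)$i) > 0" by simp
        then have nz: "\<forall>x\<in>C. A$(p x)$x \<noteq> 0" unfolding C_def by (metis (no_types) finite_set less_irrefl prod_zero_iff)
        have nfix: "p x \<noteq> x" if xC: "x \<in> C" for x
        proof -
          obtain m where m: "m < length cs" "x = cs ! m" using xC C_def by (auto simp: in_set_conv_nth)
          show ?thesis
          proof (cases "Suc m < length cs")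
            case True
            then have "p x = cs ! Suc m" using D(8) m by simp
            then show ?thesis using D(4) m True by (simp add: nth_eq_iff_index_eq)
          next
            case False
            then have "m = length cs - 1" using m by simp
            then have "x = last cs" using m D(5) by (simp add: last_conv_nth)
            then have "p x = cs ! 0" using D(9) D(6) D(5) by (simp add: hd_conv_nth)
            moreover have "cs ! 0 \<noteq> cs ! m" using D(4) m \<open>m = length cs - 1\<close> len2
              by (subst nth_eq_iff_index_eq) auto
            ultimately show ?thesis using m by simp
          qed
        qed
        have Ep: "E x (p x) = sgn (A$(p x)$x)" if "x \<in> C" for x using Hs[of x "p x"] nfix[OF that] by metis
        have lastC: "last cs \<in> C" using D(5) C_def by simp
        have loop: "is_feedback_loop E cs"
          unfolding is_feedback_loop_def edges_present_def
        proof (intro conjI allI impI)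
          show "2 \<le> length cs" by (rule len2)
          show "distinct cs" by (rule D(4))
          fix i assume i: "Suc i < length cs"
          have xc: "cs ! i \<in> C" using i C_def by simp
          have "E (cs ! i) (cs ! Suc i) = sgn (A$(p (cs ! i))$(cs ! i))" using D(8) i Ep[OF xc] by simp
          then show "E (cs ! i) (cs ! Suc i) \<noteq> 0" using nz xc by (simp add: sgn_0_0)
        next
          have "E (last cs) (hd cs) = sgn (A$(p (last cs))$(last cs))" using D(9) D(6) Ep[OF lastC] by simp
          then show "E (last cs) (hd cs) \<noteq> 0" using nz lastC by (simp add: sgn_0_0)
        qed
        have "cycle_sign E cs = prod_list (map (\<lambda>x. E x (p x)) (butlast cs)) * E (last cs) (p (last cs))"
          unfolding cycle_sign_def walk_sign_def walk_prod[OF D(8)] using D(9) D(6) by simp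
        also have "\<dots> = prod_list (map (\<lambda>x. E x (p x)) cs)"
        proof -
          have e: "cs = butlast cs @ [last cs]" using D(5) by simp
          have "prod_list (map (\<lambda>x. E x (p x)) (butlast cs @ [last cs]))
              = prod_list (map (\<lambda>x. E x (p x)) (butlast cs)) * E (last cs) (p (last cs))" by simp
          then show ?thesis using e by simp
        qed
        also have "\<dots> = (\<Prod>x\<in>C. E x (p x))" using C_def D(4) by (simp add: prod.distinct_set_conv_list)
        also have "\<dots> = (\<Prod>x\<in>C. sgn (A$(p x)$x))" using Ep by (intro prod.cong) auto
        also have "\<dots> = sgn (\<Prod>x\<in>C. A$(p x)$x)" by (rule prod_sgn_real)
        also have "\<dots> = 1" using Qpos by simp
        finally have "cycle_sign E cs = 1" .
        moreover have "cycle_sign E cs \<le> 0" using psubset.prems(3) loop D(1) by blast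
        ultimately show False by simp
      qed
    qed
    obtain k' where k': "length cs = Suc k'" using D(5) by (cases cs) auto
    have sg: "(of_int (sign p) :: real) = of_int (sign p') * (-1) ^ k'" using D(3) k' by simp
    have pw: "(-1::real) ^ card B * (-1) ^ k' = - ((-1) ^ card B')"
    proof -
      have "(-1::real) ^ card B = (-1) ^ card B' * (-1) * (-1) ^ k'" using cardB k' by (simp add: power_add)
      then have "(-1::real) ^ card B * (-1) ^ k' = (-1) ^ card B' * (-1) * ((-1) ^ k' * (-1) ^ k')"
        by (simp only: mult.assoc)
      then show ?thesis using neg1_sq[of k'] by simp
    qed
    have "(-1) ^ card B * (of_int (sign p) * (\<Prod>i\<in>B. A$(p i)$i))
       = ((-1) ^ card B * (-1) ^ k') * (\<Prod>i\<in>C. A$(p i)$i) * (of_int (sign p') * (\<Prod>i\<in>B'. A$(p' i)$i))"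
      unfolding sg split by (simp add: algebra_simps)
    also have "\<dots> = (- (\<Prod>i\<in>C. A$(p i)$i)) * ((-1) ^ card B' * (of_int (sign p') * (\<Prod>i\<in>B'. A$(p' i)$i)))"
      unfolding pw by (simp add: algebra_simps)
    finally show ?thesis using Q IH by (simp add: mult_nonpos_nonneg)
  qed
qed

lemma term_lemma:
  fixes A :: "real^'n^'n" and E :: "'n \<Rightarrow> 'n \<Rightarrow> real" and p :: "'n \<Rightarrow> 'n"
  assumes Hs: "\<And>a b. a \<noteq> b \<Longrightarrow> E a b = sgn (A$b$a)"
    and pU: "p permutes UNIV" and pj: "p j = i1" and ji: "j \<noteq> i1"
    and nzT: "(\<Prod>i\<in>UNIV-{j}. A$(p i)$i) \<noteq> 0"
  defines "cs \<equiv> map (\<lambda>i. (p ^^ i) i1) [0..< least_power p i1]"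
  shows "is_path E i1 j cs"
    "(\<forall>i. i \<noteq> i1 \<longrightarrow> A$i$i < 0) \<Longrightarrow>
     (\<forall>c. is_feedback_loop E c \<and> set c \<inter> set cs = {} \<longrightarrow> cycle_sign E c \<le> 0) \<Longrightarrow>
     0 \<le> (-1) ^ (CARD('n) - 1) * path_sign E cs * (of_int (sign p) * (\<Prod>i\<in>UNIV-{j}. A$(p i)$i))"
proof -
  define p' where "p' = perm_restrict p (UNIV - set cs)"
  note D = perm_decomp[OF pU finite[of "UNIV :: 'n set"] UNIV_I[of i1], folded cs_def, folded p'_def]
  define C where "C = set cs"
  define B where "B = UNIV - C"
  have lastj: "last cs = j" using D(9) pj permutes_inj[OF pU] by (metis injD)
  have jC: "j \<in> C" using lastj D(5) C_def by auto
  have i1C: "i1 \<in> C" using D(7) C_def by simp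
  have pi1: "p i1 \<noteq> i1" using pj ji permutes_inj[OF pU] by (metis injD)
  have len2: "length cs \<ge> 2" using D(10) pi1 D(5) by (cases cs) (auto simp: Suc_le_eq)
  have bl: "set (butlast cs) = C - {j}" using set_butlast_distinct[OF D(4) D(5)] lastj C_def by simp
  have split: "(\<Prod>i\<in>UNIV-{j}. A$(p i)$i) = (\<Prod>i\<in>C-{j}. A$(p i)$i) * (\<Prod>i\<in>B. A$(p' i)$i)"
  proof -
    have u: "UNIV - {j} = (C - {j}) \<union> B" using jC B_def by auto
    have "(\<Prod>i\<in>UNIV-{j}. A$(p i)$i) = (\<Prod>i\<in>C-{j}. A$(p i)$i) * (\<Prod>i\<in>B. A$(p i)$i)"
      unfolding u by (rule prod.union_disjoint) (auto simp: B_def)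
    moreover have "(\<Prod>i\<in>B. A$(p i)$i) = (\<Prod>i\<in>B. A$(p' i)$i)"
      using D(12) unfolding B_def C_def by (intro prod.cong) auto
    ultimately show ?thesis by simp
  qed
  have nz1: "\<forall>x\<in>C-{j}. A$(p x)$x \<noteq> 0" using nzT split
    by (metis (no_types) finite mult_eq_0_iff prod_zero_iff)
  have nfix: "p x \<noteq> x" if xC: "x \<in> C - {j}" for x
  proof -
    obtain m where m: "m < length cs" "cs ! m = x" using xC C_def by (auto simp: in_set_conv_nth)
    have "m \<noteq> length cs - 1" using m xC lastj D(5) by (auto simp: last_conv_nth)
    then have sm: "Suc m < length cs" using m by simp
    then have px: "p x = cs ! Suc m" using D(8) m by simp
    have "cs ! Suc m \<noteq> cs ! m" using D(4) sm by (simp add: nth_eq_iff_index_eq)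
    then show ?thesis using px m by simp
  qed
  have Ep: "E x (p x) = sgn (A$(p x)$x)" if "x \<in> C - {j}" for x
    using Hs[of x "p x"] nfix[OF that] by metis
  show path: "is_path E i1 j cs"
    unfolding is_path_def edges_present_def
  proof (intro conjI allI impI)
    show "cs \<noteq> []" "hd cs = i1" "last cs = j" "distinct cs" using D lastj by auto
    fix i assume i: "Suc i < length cs"
    have "cs ! i \<noteq> last cs" using D(4) D(5) i by (simp add: last_conv_nth nth_eq_iff_index_eq)
    then have xc: "cs ! i \<in> C - {j}" using i C_def lastj by simp
    have "E (cs ! i) (cs ! Suc i) = sgn (A$(p (cs ! i))$(cs ! i))" using D(8) i Ep[OF xc] by simp
    then show "E (cs ! i) (cs ! Suc i) \<noteq> 0" using nz1 xc by (simp add: sgn_0_0)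
  qed
  have ps: "path_sign E cs = sgn (\<Prod>i\<in>C-{j}. A$(p i)$i)"
  proof -
    have "path_sign E cs = prod_list (map (\<lambda>x. E x (p x)) (butlast cs))"
      unfolding path_sign_def walk_sign_def walk_prod[OF D(8)] ..
    also have "\<dots> = (\<Prod>x\<in>C-{j}. E x (p x))"
      using prod.distinct_set_conv_list[OF distinct_butlast[OF D(4)], of "\<lambda>x. E x (p x)"] bl by simp
    also have "\<dots> = (\<Prod>x\<in>C-{j}. sgn (A$(p x)$x))" using Ep by (intro prod.cong) auto
    also have "\<dots> = sgn (\<Prod>x\<in>C-{j}. A$(p x)$x)" by (rule prod_sgn_real)
    finally show ?thesis .
  qed
  assume diag: "\<forall>i. i \<noteq> i1 \<longrightarrow> A$i$i < 0"
    and nopos: "\<forall>c. is_feedback_loop E c \<and> set c \<inter> set cs = {} \<longrightarrow> cycle_sign E c \<le> 0"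
  have L: "0 \<le> (-1) ^ card B * (of_int (sign p') * (\<Prod>i\<in>B. A$(p' i)$i))"
  proof (rule cover_sign[OF Hs])
    show "p' permutes B" using D(2) unfolding B_def C_def .
    show "\<forall>i\<in>B. A $ i $ i < 0" using diag i1C B_def by auto
    show "\<forall>c. is_feedback_loop E c \<and> set c \<subseteq> B \<longrightarrow> cycle_sign E c \<le> 0"
      using nopos unfolding B_def C_def by auto
  qed
  obtain k' where k': "length cs = Suc k'" using D(5) by (cases cs) auto
  have cardU: "CARD('n) - 1 = card B + k'"
  proof -
    have "card B = CARD('n) - card C" unfolding B_def by (simp add: card_Diff_subset)
    moreover have "card C = length cs" using distinct_card[OF D(4)] C_def by simp
    moreover have "card C \<le> CARD('n)" by (simp add: card_mono)
    ultimately show ?thesis using k' by simp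
  qed
  have sg: "(of_int (sign p) :: real) = of_int (sign p') * (-1) ^ k'" using D(3) k' by simp
  define Q where "Q = (\<Prod>i\<in>C-{j}. A$(p i)$i)"
  have "(-1) ^ (CARD('n) - 1) * path_sign E cs * (of_int (sign p) * (\<Prod>i\<in>UNIV-{j}. A$(p i)$i))
      = ((-1) ^ k' * (-1) ^ k') * (sgn Q * Q) * ((-1) ^ card B * (of_int (sign p') * (\<Prod>i\<in>B. A$(p' i)$i)))"
    unfolding cardU ps sg split Q_def[symmetric] by (simp add: power_add algebra_simps)
  also have "\<dots> = \<bar>Q\<bar> * ((-1) ^ card B * (of_int (sign p') * (\<Prod>i\<in>B. A$(p' i)$i)))"
    by (simp add: neg1_sq sgn_self_abs)
  finally show "0 \<le> (-1) ^ (CARD('n) - 1) * path_sign E cs * (of_int (sign p) * (\<Prod>i\<in>UNIV-{j}. A$(p i)$i))"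
    using L by simp
qed

lemma abs_prod_list_1: "(\<forall>x\<in>set xs. \<bar>x\<bar> = (1::real)) \<Longrightarrow> \<bar>prod_list xs\<bar> = 1"
  by (induction xs) (auto simp: abs_mult)

lemma abs_walk_sign:
  assumes "edges_present E vs" "\<forall>a b. E a b \<noteq> 0 \<longrightarrow> \<bar>E a b\<bar> = 1"
  shows "\<bar>walk_sign E vs\<bar> = 1"
  unfolding walk_sign_def
proof (rule abs_prod_list_1, intro ballI)
  fix x assume "x \<in> set (map (\<lambda>(a, b). E a b) (zip vs (tl vs)))"
  then obtain i where i: "i < min (length vs) (length (tl vs))" "x = E (vs ! i) (tl vs ! i)"
    by (auto simp: set_zip)
  then have "x = E (vs ! i) (vs ! Suc i)" "Suc i < length vs" by (auto simp: nth_tl)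
  then show "\<bar>x\<bar> = 1" using assms unfolding edges_present_def by auto
qed

definition Ssum :: "real^'n^'n \<Rightarrow> 'n \<Rightarrow> 'n \<Rightarrow> real" where
  "Ssum M i1 j = (\<Sum>p\<in>{p. p permutes (UNIV :: 'n set)}.
      (if p j = i1 then of_int (sign p) * (\<Prod>i\<in>UNIV-{j}. M$(p i)$i) else 0))"

lemma Ssum_zero:
  fixes M :: "real^'n^'n"
  assumes Hs: "\<And>a b. a \<noteq> b \<Longrightarrow> E a b = sgn (M$b$a)"
    and ji: "j \<noteq> i1" and nop: "\<not> has_io_path E i1 j"
  shows "Ssum M i1 j = 0"
  unfolding Ssum_def
proof (rule sum.neutral, intro ballI)
  fix p assume p: "p \<in> {p. p permutes (UNIV :: 'n set)}"
  show "(if p j = i1 then of_int (sign p) * (\<Prod>i\<in>UNIV-{j}. M$(p i)$i) else 0) = 0"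
  proof (cases "p j = i1 \<and> (\<Prod>i\<in>UNIV-{j}. M$(p i)$i) \<noteq> 0")
    case True
    then have "is_path E i1 j (map (\<lambda>i. (p ^^ i) i1) [0..< least_power p i1])"
      using term_lemma(1)[OF Hs _ _ ji] p by blast
    then show ?thesis using nop unfolding has_io_path_def by blast
  qed auto
qed

lemma Ssum_pos:
  fixes M :: "real^'n^'n"
  assumes Hs: "\<And>a b. a \<noteq> b \<Longrightarrow> E a b = sgn (M$b$a)"
    and Eabs: "\<forall>a b. E a b \<noteq> 0 \<longrightarrow> \<bar>E a b\<bar> = 1"
    and ji: "j \<noteq> i1"
    and diag: "\<forall>i. i \<noteq> i1 \<longrightarrow> M$i$i < 0"
    and P0: "is_path E i1 j P0"
    and noiffl: "\<not> has_IFFL E i1 j"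
    and nopl: "\<not> has_pos_loop_disjoint_from_io_path E i1 j"
  shows "0 < (-1) ^ (CARD('n) - 1) * path_sign E P0 * Ssum M i1 j"
proof -
  have abs0: "\<bar>path_sign E P0\<bar> = 1"
    using P0 Eabs abs_walk_sign unfolding is_path_def path_sign_def by blast
  have same: "path_sign E q = path_sign E P0" if q: "is_path E i1 j q" for q
  proof (rule ccontr)
    assume ne: "path_sign E q \<noteq> path_sign E P0"
    have "\<bar>path_sign E q\<bar> = 1"
      using q Eabs abs_walk_sign unfolding is_path_def path_sign_def by blast
    then have "path_sign E q = - path_sign E P0" using abs0 ne by (auto simp: abs_if split: if_splits)
    moreover have "q \<noteq> P0" using ne by auto
    ultimately show False using noiffl q P0 unfolding has_IFFL_def by blast
  qed
  define \<sigma> where "\<sigma> = (-1::real) ^ (CARD('n) - 1) * path_sign E P0"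
  have snz: "\<sigma> \<noteq> 0" using abs0 unfolding \<sigma>_def by auto
  define T where "T p = (if p j = i1 then of_int (sign p) * (\<Prod>i\<in>UNIV-{j}. M$(p i)$i) else 0)" for p :: "'n \<Rightarrow> 'n"
  have Tnn: "0 \<le> \<sigma> * T p" if p: "p permutes UNIV" for p
  proof (cases "p j = i1 \<and> (\<Prod>i\<in>UNIV-{j}. M$(p i)$i) \<noteq> 0")
    case True
    define cs where "cs = map (\<lambda>i. (p ^^ i) i1) [0..< least_power p i1]"
    have path: "is_path E i1 j cs" unfolding cs_def using term_lemma(1)[OF Hs p _ ji] True by blast
    have nopos: "\<forall>c. is_feedback_loop E c \<and> set c \<inter> set cs = {} \<longrightarrow> cycle_sign E c \<le> 0"
      using nopl path unfolding has_pos_loop_disjoint_from_io_path_def by (meson not_le)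
    have "0 \<le> (-1) ^ (CARD('n) - 1) * path_sign E cs * (of_int (sign p) * (\<Prod>i\<in>UNIV-{j}. M$(p i)$i))"
      using term_lemma(2)[OF Hs p _ ji] True diag nopos unfolding cs_def by blast
    then show ?thesis using same[OF path] True unfolding \<sigma>_def T_def by (simp add: mult.assoc)
  next
    case False
    then have "T p = 0" unfolding T_def by (cases "p j = i1") (simp_all del: prod_zero_iff)
    then show ?thesis by simp
  qed
  define c0 where "c0 = cycle_of_list P0"
  have dP: "distinct P0" "P0 \<noteq> []" "hd P0 = i1" "last P0 = j" using P0 unfolding is_path_def by auto
  have c0U: "c0 permutes UNIV" unfolding c0_def by (rule permutes_subset[OF cycle_permutes]) simp
  have rot: "c0 (P0 ! m) = P0 ! (Suc m mod length P0)" if "m < length P0" for m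
  proof -
    have "map c0 P0 = rotate1 P0" using cyclic_rotation[OF dP(1), of 1] unfolding c0_def by simp
    then have "c0 (P0 ! m) = rotate1 P0 ! m" using that by (metis nth_map)
    then show ?thesis using nth_rotate1[OF that] by simp
  qed
  have c0j: "c0 j = i1"
  proof -
    have "j = P0 ! (length P0 - 1)" using dP by (simp add: last_conv_nth)
    then have "c0 j = P0 ! (Suc (length P0 - 1) mod length P0)" using rot dP(2) by simp
    also have "\<dots> = P0 ! 0" using dP(2) by simp
    finally show ?thesis using dP by (simp add: hd_conv_nth)
  qed
  have Tc0: "(\<Prod>i\<in>UNIV-{j}. M$(c0 i)$i) \<noteq> 0"
  proof -
    have "M$(c0 i)$i \<noteq> 0" if i: "i \<noteq> j" for i
    proof (cases "i \<in> set P0")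
      case True
      then obtain m where m: "m < length P0" "P0 ! m = i" by (auto simp: in_set_conv_nth)
      have "m \<noteq> length P0 - 1" using m i dP by (auto simp: last_conv_nth)
      then have sm: "Suc m < length P0" using m by simp
      then have ci: "c0 i = P0 ! Suc m" using rot[of m] m by simp
      have ne: "P0 ! Suc m \<noteq> P0 ! m" using dP(1) sm by (simp add: nth_eq_iff_index_eq)
      have "E (P0 ! m) (P0 ! Suc m) \<noteq> 0" using P0 sm unfolding is_path_def edges_present_def by blast
      then show ?thesis using Hs[OF ne[symmetric]] ci m by (simp add: sgn_0_0)
    next
      case False
      then have "c0 i = i" unfolding c0_def by (rule id_outside_supp)
      moreover have "i \<noteq> i1" using False dP by (metis hd_in_set)
      ultimately show ?thesis using diag by (metis less_irrefl)
    qed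
    then show ?thesis by (simp add: prod_zero_iff)
  qed
  have T0pos: "0 < \<sigma> * T c0"
  proof -
    have "T c0 \<noteq> 0" unfolding T_def using c0j Tc0 by simp
    then have "\<sigma> * T c0 \<noteq> 0" using snz by simp
    then show ?thesis using Tnn[OF c0U] by linarith
  qed
  have "\<sigma> * Ssum M i1 j = (\<Sum>p\<in>{p. p permutes (UNIV :: 'n set)}. \<sigma> * T p)"
    unfolding Ssum_def T_def by (simp add: sum_distrib_left)
  also have "\<dots> > 0"
    by (rule sum_pos2[where i=c0]) (use c0U T0pos Tnn finite_permutations in auto)
  finally show ?thesis unfolding \<sigma>_def by simp
qed


definition dgdu :: "control \<Rightarrow> real \<Rightarrow> real \<Rightarrow> real" where
  "dgdu c xT x1 = (case c of Flow \<Rightarrow> 1 | Activation \<Rightarrow> xT - x1 | Inhibition \<Rightarrow> - x1)"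

lemma axis_scale: "axis i (r::real) = r *\<^sub>R axis i 1"
  by (simp add: vec_eq_iff axis_def)

lemma gctl_deriv:
  assumes comp: "((\<lambda>v. xs v $ i1) has_derivative (\<lambda>h. h * d)) (at u within I)"
  shows "((\<lambda>v. gctl c xT kon koff v (xs v $ i1)) has_derivative
          (\<lambda>h. h * (dgdu c xT (xs u $ i1) + dgctl_dx1 c xT kon koff u * d))) (at u within I)"
proof (cases c)
  case Flow
  then show ?thesis unfolding gctl_def dgdu_def dgctl_dx1_def
    by (auto intro!: derivative_eq_intros)
next
  case Activation
  then show ?thesis unfolding gctl_def dgdu_def dgctl_dx1_def
    by (auto intro!: derivative_eq_intros comp simp: algebra_simps)
next
  case Inhibition
  then show ?thesis unfolding gctl_def dgdu_def dgctl_dx1_def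
    by (auto intro!: derivative_eq_intros comp simp: algebra_simps)
qed

lemma not_bot_interval:
  fixes I :: "real set"
  assumes "is_interval I" "\<exists>a\<in>I. \<exists>b\<in>I. a < b" "u \<in> I"
  shows "at u within I \<noteq> bot"
proof -
  have "u islimpt I"
  proof (rule connected_imp_perfect)
    show "connected I" using assms(1) by (rule is_interval_connected)
    show "u \<in> I" by fact
    fix x show "I \<noteq> {x}" using assms(2) by auto
  qed
  then show ?thesis using trivial_limit_within by blast
qed

lemma ss_deriv:
  fixes f :: "real^'n \<Rightarrow> real^'n" and Df :: "real^'n \<Rightarrow> real^'n^'n"
  assumes f_deriv: "\<forall>x\<in>X. (f has_derivative (\<lambda>h. Df x *v h)) (at x within X)"
    and ss: "ss_curve (Fsys f c xT kon koff i1) (DFsys Df c xT kon koff i1) X I xs xs'"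
    and u: "u \<in> I"
  shows "DFsys Df c xT kon koff i1 (xs u) u *v xs' u = (- dgdu c xT (xs u $ i1)) *\<^sub>R axis i1 1"
proof -
  note ssd = ss[unfolded ss_curve_def]
  have xsX: "xs ` I \<subseteq> X" using ssd by auto
  have zero: "\<And>v. v \<in> I \<Longrightarrow> Fsys f c xT kon koff i1 (xs v) v = 0" using ssd by auto
  have xsd: "(xs has_derivative (\<lambda>h. h *\<^sub>R xs' u)) (at u within I)"
    using ssd u by (auto simp: has_vector_derivative_def)
  have fd: "((\<lambda>v. f (xs v)) has_derivative (\<lambda>h. Df (xs u) *v (h *\<^sub>R xs' u))) (at u within I)"
    by (rule has_derivative_in_compose2[of X f "\<lambda>x h. Df x *v h", OF _ xsX u xsd]) (use f_deriv in auto)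
  have comp: "((\<lambda>v. xs v $ i1) has_derivative (\<lambda>h. h * xs' u $ i1)) (at u within I)"
    using bounded_linear.has_derivative[OF bounded_linear_vec_nth xsd, of i1] by simp
  define K where "K = dgdu c xT (xs u $ i1) + dgctl_dx1 c xT kon koff u * xs' u $ i1"
  have gd: "((\<lambda>v. gctl c xT kon koff v (xs v $ i1)) has_derivative (\<lambda>h. h * K)) (at u within I)"
    unfolding K_def by (rule gctl_deriv[OF comp])
  define V where "V = Df (xs u) *v xs' u + K *\<^sub>R axis i1 1"
  have Phid: "((\<lambda>v. Fsys f c xT kon koff i1 (xs v) v) has_derivative (\<lambda>h. h *\<^sub>R V)) (at u within I)"
  proof -
    have "((\<lambda>v. f (xs v) + gctl c xT kon koff v (xs v $ i1) *\<^sub>R axis i1 1) has_derivative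
        (\<lambda>h. Df (xs u) *v (h *\<^sub>R xs' u) + (h * K) *\<^sub>R axis i1 1)) (at u within I)"
      by (intro has_derivative_add fd has_derivative_scaleR_left gd)
    moreover have "(\<lambda>h. Df (xs u) *v (h *\<^sub>R xs' u) + (h * K) *\<^sub>R axis i1 1) = (\<lambda>h. h *\<^sub>R V)"
      unfolding V_def by (auto simp: matrix_vector_mult_scaleR scaleR_add_right)
    moreover have "\<And>x v. Fsys f c xT kon koff i1 x v = f x + gctl c xT kon koff v (x $ i1) *\<^sub>R axis i1 1"
      by (simp add: Fsys_def vec_eq_iff axis_def)
    ultimately show ?thesis by simp
  qed
  have "((\<lambda>v. 0) has_derivative (\<lambda>h. h *\<^sub>R V)) (at u within I)"
    by (rule has_derivative_transform[OF u _ Phid]) (use zero in auto)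
  then have d1: "((\<lambda>v. 0) has_vector_derivative V) (at u within I)" by (simp add: has_vector_derivative_def)
  have d2: "((\<lambda>v. 0 :: real^'n) has_vector_derivative 0) (at u within I)" by (rule has_vector_derivative_const)
  have V0: "V = 0"
    using vector_derivative_unique_within[OF not_bot_interval[OF _ _ u] d1 d2] ssd by auto
  have Mv: "(\<chi> i k. if i = i1 \<and> k = i1 then dgctl_dx1 c xT kon koff u else 0) *v xs' u
      = (dgctl_dx1 c xT kon koff u * xs' u $ i1) *\<^sub>R axis i1 1"
    by (simp add: vec_eq_iff matrix_vector_mult_def axis_def if_distrib[of "\<lambda>z. z * _"] cong: if_cong)
  have "DFsys Df c xT kon koff i1 (xs u) u *v xs' u = Df (xs u) *v xs' u + (dgctl_dx1 c xT kon koff u * xs' u $ i1) *\<^sub>R axis i1 1"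
    unfolding DFsys_def matrix_vector_mult_add_rdistrib Mv ..
  also have "\<dots> = V - dgdu c xT (xs u $ i1) *\<^sub>R axis i1 1"
    unfolding V_def K_def by (simp add: algebra_simps)
  finally show ?thesis using V0 by simp
qed

lemma det_col:
  fixes M :: "real^'n^'n"
  shows "det (\<chi> i k. if k = j then ((\<beta>::real) *\<^sub>R axis i1 1)$i else M$i$k) = \<beta> * Ssum M i1 j"
proof -
  define A where "A = (\<chi> i k. if k = j then ((\<beta>::real) *\<^sub>R axis i1 1)$i else M$i$k)"
  have "det A = det (transpose A)" by simp
  also have "\<dots> = (\<Sum>p\<in>{p. p permutes (UNIV :: 'n set)}. of_int (sign p) * (\<Prod>i\<in>UNIV. A$(p i)$i))"
    unfolding det_def transpose_def by simp
  also have "\<dots> = (\<Sum>p\<in>{p. p permutes (UNIV :: 'n set)}. \<beta> *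
      (if p j = i1 then of_int (sign p) * (\<Prod>i\<in>UNIV-{j}. M$(p i)$i) else 0))"
  proof (rule sum.cong[OF refl])
    fix p :: "'n \<Rightarrow> 'n"
    have "(\<Prod>i\<in>UNIV. A$(p i)$i) = A$(p j)$j * (\<Prod>i\<in>UNIV-{j}. A$(p i)$i)"
      by (rule prod.remove) simp_all
    also have "(\<Prod>i\<in>UNIV-{j}. A$(p i)$i) = (\<Prod>i\<in>UNIV-{j}. M$(p i)$i)"
      by (rule prod.cong) (auto simp: A_def)
    also have "A$(p j)$j = \<beta> * (if p j = i1 then 1 else 0)" by (simp add: A_def axis_def)
    finally show "of_int (sign p) * (\<Prod>i\<in>UNIV. A$(p i)$i) = \<beta> *
      (if p j = i1 then of_int (sign p) * (\<Prod>i\<in>UNIV-{j}. M$(p i)$i) else 0)" by simp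
  qed
  also have "\<dots> = \<beta> * Ssum M i1 j" unfolding Ssum_def by (simp add: sum_distrib_left)
  finally show ?thesis unfolding A_def .
qed

lemma Hs_DF:
  assumes sign_const: "\<forall>i k. (\<forall>x\<in>X. Df x $ i $ k > 0) \<or> (\<forall>x\<in>X. Df x $ i $ k < 0)
                          \<or> (\<forall>x\<in>X. Df x $ i $ k = 0)"
    and x: "x \<in> X" and ab: "a \<noteq> b"
  shows "edge_sign Df X a b = sgn (DFsys Df c xT kon koff i1 x u $ b $ a)"
proof -
  have e: "DFsys Df c xT kon koff i1 x u $ b $ a = Df x $ b $ a" using ab by (auto simp: DFsys_def)
  from sign_const[rule_format, of b a] consider (pos) "\<forall>x\<in>X. Df x $ b $ a > 0"
    | (neg) "\<forall>x\<in>X. Df x $ b $ a < 0" | (zero) "\<forall>x\<in>X. Df x $ b $ a = 0" by blast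
  then show ?thesis
  proof cases
    case pos
    then have "edge_sign Df X a b = 1" using x unfolding edge_sign_def by auto
    then show ?thesis unfolding e using pos x by simp
  next
    case neg
    then have "edge_sign Df X a b = -1" using x unfolding edge_sign_def by force
    then show ?thesis unfolding e using neg x by simp
  next
    case zero
    then have "edge_sign Df X a b = 0" using x unfolding edge_sign_def by force
    then show ?thesis unfolding e using zero x by simp
  qed
qed

lemma same_sign_cont:
  fixes d :: "real \<Rightarrow> real"
  assumes I: "is_interval I" and dc: "continuous_on I d" and nz: "\<forall>u\<in>I. d u \<noteq> 0"
    and u1: "u1 \<in> I" and u2: "u2 \<in> I"
  shows "d u1 * d u2 > 0"
proof -
  have key: "d a * d b > 0" if a: "a \<in> I" and b: "b \<in> I" and ab: "a \<le> b" for a b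
  proof (rule ccontr)
    assume "\<not> d a * d b > 0"
    moreover have "d a \<noteq> 0" "d b \<noteq> 0" using nz a b by auto
    ultimately have cases: "(d a < 0 \<and> 0 < d b) \<or> (d b < 0 \<and> 0 < d a)"
    proof (cases "d a < 0")
      case True
      then have "\<not> d b < 0" using mult_neg_neg \<open>\<not> d a * d b > 0\<close> by blast
      then show ?thesis using True \<open>d b \<noteq> 0\<close> by linarith
    next
      case False
      then have da: "d a > 0" using \<open>d a \<noteq> 0\<close> by linarith
      then have "\<not> d b > 0" using mult_pos_pos \<open>\<not> d a * d b > 0\<close> by blast
      then show ?thesis using da \<open>d b \<noteq> 0\<close> by linarith
    qed
    have sub: "{a..b} \<subseteq> I"
    proof
      fix x assume "x \<in> {a..b}"
      then show "x \<in> I" using mem_is_interval_1_I[OF I a b] by simp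
    qed
    have cab: "continuous_on {a..b} d" using continuous_on_subset[OF dc sub] .
    obtain x where x: "a \<le> x" "x \<le> b" "d x = 0"
    proof -
      show thesis
      proof (cases "d a < 0 \<and> 0 < d b")
        case True
        then show thesis using IVT'[where f=d and a=a and b=b and y=0] ab cab that by force
      next
        case False
        then have "d b < 0 \<and> 0 < d a" using cases by blast
        then show thesis using IVT2'[where f=d and a=a and b=b and y=0] ab cab that by force
      qed
    qed
    then have "x \<in> I" using sub by auto
    then show False using nz x by auto
  qed
  show ?thesis
  proof (cases "u1 \<le> u2")
    case True then show ?thesis using key u1 u2 by blast
  next
    case False then show ?thesis using key[OF u2 u1] by (simp add: mult.commute)
  qed
qed

lemma det_cont:
  fixes Df :: "real^'n \<Rightarrow> real^'n^'n"
  assumes Df_cont: "continuous_on X Df"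
    and ss: "ss_curve F (DFsys Df c xT kon koff i1) X I xs xs'"
  shows "continuous_on I (\<lambda>v. det (DFsys Df c xT kon koff i1 (xs v) v))"
proof -
  note ssd = ss[unfolded ss_curve_def]
  have xsc: "continuous_on I xs"
    using ssd has_vector_derivative_continuous continuous_on_eq_continuous_within by blast
  have xsX: "xs ` I \<subseteq> X" using ssd by auto
  have c1: "continuous_on I (\<lambda>v. Df (xs v))" by (rule continuous_on_compose2[OF Df_cont xsc xsX])
  have c2: "continuous_on I (\<lambda>v. dgctl_dx1 c xT kon koff v)"
    unfolding dgctl_dx1_def by (cases c) (auto intro!: continuous_intros)
  define E0 :: "real^'n^'n" where "E0 = (\<chi> i k. if i = i1 \<and> k = i1 then 1 else 0)"
  have eq: "DFsys Df c xT kon koff i1 (xs v) v = Df (xs v) + dgctl_dx1 c xT kon koff v *\<^sub>R E0" for v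
    unfolding DFsys_def E0_def by (simp add: vec_eq_iff)
  have Mc: "continuous_on I (\<lambda>v. DFsys Df c xT kon koff i1 (xs v) v)"
    unfolding eq by (intro continuous_intros c1 c2)
  show ?thesis unfolding det_def
    by (intro continuous_intros continuous_on_component Mc)
qed

theorem theorem11:
  fixes f :: "real^'n \<Rightarrow> real^'n" and Df :: "real^'n \<Rightarrow> real^'n^'n"
    and X :: "(real^'n) set" and J :: "real set"
    and c :: control and xT kon koff :: real and i1 j :: 'n
  assumes J_interval: "is_interval J" "\<exists>a\<in>J. \<exists>b\<in>J. a < b"
    and f_deriv: "\<forall>x\<in>X. (f has_derivative (\<lambda>h. Df x *v h)) (at x within X)"
    and Df_cont: "continuous_on X Df"
    and sign_const: "\<forall>i k. (\<forall>x\<in>X. Df x $ i $ k > 0) \<or> (\<forall>x\<in>X. Df x $ i $ k < 0)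
                          \<or> (\<forall>x\<in>X. Df x $ i $ k = 0)"
    and diag_neg: "\<forall>i. \<forall>x\<in>X. Df x $ i $ i < 0"
    and ctl: "c \<noteq> Flow \<longrightarrow>
               (0 < xT \<and> 0 < kon \<and> 0 < koff
                \<and> (\<forall>x\<in>X. 0 \<le> x $ i1 \<and> x $ i1 \<le> xT)
                \<and> (\<forall>u\<in>J. \<forall>x\<in>X. Fsys f c xT kon koff i1 x u = 0 \<longrightarrow> 0 < x $ i1 \<and> x $ i1 < xT))"
    and A0: "\<forall>u0\<in>J. \<exists>x0\<in>X. Fsys f c xT kon koff i1 x0 u0 = 0
                              \<and> rank (DFsys Df c xT kon koff i1 x0 u0) = CARD('n)"
    and j_ne: "j \<noteq> i1"
  shows
    "(\<not> has_io_path (edge_sign Df X) i1 j \<longrightarrow>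
        (\<forall>I xs xs'. I \<subseteq> J \<longrightarrow>
            ss_curve (Fsys f c xT kon koff i1) (DFsys Df c xT kon koff i1) X I xs xs' \<longrightarrow>
            (\<forall>u\<in>I. \<forall>v\<in>I. xs u $ j = xs v $ j)))
     \<and>
     (has_io_path (edge_sign Df X) i1 j
        \<and> \<not> has_IFFL (edge_sign Df X) i1 j
        \<and> \<not> has_pos_loop_disjoint_from_io_path (edge_sign Df X) i1 j \<longrightarrow>
        (\<forall>I xs xs'. I \<subseteq> J \<longrightarrow>
            ss_curve (Fsys f c xT kon koff i1) (DFsys Df c xT kon koff i1) X I xs xs' \<longrightarrow>
            \<not> quasi_adaptive_on I xs' j \<and> \<not> biphasic_on I xs' j))"
proof -
  define E where "E = edge_sign Df X"
  have Eabs: "\<forall>a b. E a b \<noteq> 0 \<longrightarrow> \<bar>E a b\<bar> = 1" unfolding E_def edge_sign_def by auto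
  have facts: "xs u \<in> X \<and> det (DFsys Df c xT kon koff i1 (xs u) u) \<noteq> 0
      \<and> xs' u $ j = (- dgdu c xT (xs u $ i1)) * Ssum (DFsys Df c xT kon koff i1 (xs u) u) i1 j
                      / det (DFsys Df c xT kon koff i1 (xs u) u)
      \<and> (\<forall>a b. a \<noteq> b \<longrightarrow> E a b = sgn (DFsys Df c xT kon koff i1 (xs u) u $ b $ a))
      \<and> (\<forall>i. i \<noteq> i1 \<longrightarrow> DFsys Df c xT kon koff i1 (xs u) u $ i $ i < 0)
      \<and> sgn (dgdu c xT (xs u $ i1)) = (case c of Inhibition \<Rightarrow> -1 | _ \<Rightarrow> 1)"
    if IJ: "I \<subseteq> J" and ss: "ss_curve (Fsys f c xT kon koff i1) (DFsys Df c xT kon koff i1) X I xs xs'"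
      and u: "u \<in> I" for I xs xs' u
  proof -
    note ssd = ss[unfolded ss_curve_def]
    define M where "M = DFsys Df c xT kon koff i1 (xs u) u"
    have xu: "xs u \<in> X" and F0: "Fsys f c xT kon koff i1 (xs u) u = 0" and rk: "rank M = CARD('n)"
      using ssd u M_def by auto
    have "inj ((*v) M)" using rk full_rank_injective by blast
    then have "invertible M" using matrix_left_invertible_injective invertible_left_inverse by blast
    then have dnz: "det M \<noteq> 0" using invertible_det_nz by blast
    define \<beta> where "\<beta> = - dgdu c xT (xs u $ i1)"
    have Mv: "M *v xs' u = \<beta> *\<^sub>R axis i1 1" unfolding M_def \<beta>_def by (rule ss_deriv[OF f_deriv ss u])
    have "xs' u = (\<chi> k. det (\<chi> i jj. if jj = k then (\<beta> *\<^sub>R axis i1 1) $ i else M $ i $ jj) / det M)"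
      using cramer[OF dnz] Mv by blast
    then have xj: "xs' u $ j = \<beta> * Ssum M i1 j / det M" using det_col[of j \<beta> i1 M] by simp
    have Hs: "\<forall>a b. a \<noteq> b \<longrightarrow> E a b = sgn (M $ b $ a)"
      unfolding E_def M_def using Hs_DF[OF sign_const xu] by blast
    have dg: "\<forall>i. i \<noteq> i1 \<longrightarrow> M $ i $ i < 0" unfolding M_def DFsys_def using diag_neg xu by auto
    have sg: "sgn (dgdu c xT (xs u $ i1)) = (case c of Inhibition \<Rightarrow> -1 | _ \<Rightarrow> 1)"
    proof (cases c)
      case Flow then show ?thesis by (simp add: dgdu_def)
    next
      case Activation
      then have "xs u $ i1 < xT" using ctl u IJ xu F0 by blast
      then show ?thesis using Activation by (simp add: dgdu_def)
    next
      case Inhibition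
      then have "0 < xs u $ i1" using ctl u IJ xu F0 by blast
      then show ?thesis using Inhibition by (simp add: dgdu_def)
    qed
    show ?thesis using xu dnz xj Hs dg sg unfolding M_def \<beta>_def by blast
  qed
  show ?thesis
  proof (rule conjI; intro impI allI)
    fix I xs xs'
    assume nop: "\<not> has_io_path (edge_sign Df X) i1 j" and IJ: "I \<subseteq> J"
      and ss: "ss_curve (Fsys f c xT kon koff i1) (DFsys Df c xT kon koff i1) X I xs xs'"
    note ssd = ss[unfolded ss_curve_def]
    have z: "xs' v $ j = 0" if v: "v \<in> I" for v
    proof -
      have "Ssum (DFsys Df c xT kon koff i1 (xs v) v) i1 j = 0"
        using Ssum_zero[of E _ j i1] facts[OF IJ ss v] j_ne nop unfolding E_def by metis
      then show ?thesis using facts[OF IJ ss v] by simp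
    qed
    have "\<exists>k. \<forall>v\<in>I. xs v $ j = k"
    proof (rule has_derivative_zero_constant)
      show "convex I" using ssd is_interval_convex by blast
      fix v assume v: "v \<in> I"
      have "(xs has_derivative (\<lambda>h. h *\<^sub>R xs' v)) (at v within I)"
        using ssd v by (auto simp: has_vector_derivative_def)
      from bounded_linear.has_derivative[OF bounded_linear_vec_nth this, of j]
      show "((\<lambda>v. xs v $ j) has_derivative (\<lambda>h. 0)) (at v within I)" using z[OF v] by simp
    qed
    then show "\<forall>u\<in>I. \<forall>v\<in>I. xs u $ j = xs v $ j" by auto
  next
    fix I xs xs'
    assume hyp: "has_io_path (edge_sign Df X) i1 j \<and> \<not> has_IFFL (edge_sign Df X) i1 j
        \<and> \<not> has_pos_loop_disjoint_from_io_path (edge_sign Df X) i1 j"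
      and IJ: "I \<subseteq> J"
      and ss: "ss_curve (Fsys f c xT kon koff i1) (DFsys Df c xT kon koff i1) X I xs xs'"
    note ssd = ss[unfolded ss_curve_def]
    obtain P0 where P0: "is_path E i1 j P0" using hyp unfolding has_io_path_def E_def by blast
    define \<sigma> where "\<sigma> = (-1::real) ^ (CARD('n) - 1) * path_sign E P0"
    define d where "d v = det (DFsys Df c xT kon koff i1 (xs v) v)" for v
    define S where "S v = Ssum (DFsys Df c xT kon koff i1 (xs v) v) i1 j" for v
    define \<beta> where "\<beta> v = - dgdu c xT (xs v $ i1)" for v
    have Spos: "0 < \<sigma> * S v" if v: "v \<in> I" for v
      unfolding \<sigma>_def S_def
      by (rule Ssum_pos[OF _ Eabs j_ne _ P0]) (use facts[OF IJ ss v] hyp E_def in auto)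
    have xj: "xs' v $ j = \<beta> v * S v / d v" if "v \<in> I" for v
      using facts[OF IJ ss that] unfolding \<beta>_def S_def d_def by simp
    have dcont: "continuous_on I d" unfolding d_def by (rule det_cont[OF Df_cont ss])
    have prod_pos: "xs' u1 $ j * xs' u2 $ j > 0" if u1: "u1 \<in> I" and u2: "u2 \<in> I" for u1 u2
    proof -
      have dd: "d u1 * d u2 > 0"
        by (rule same_sign_cont[OF _ dcont _ u1 u2]) (use ssd facts[OF IJ ss] d_def in auto)
      have "sgn (\<beta> u1) = sgn (\<beta> u2)" "\<beta> u1 \<noteq> 0"
        using facts[OF IJ ss u1] facts[OF IJ ss u2] unfolding \<beta>_def
        by (auto simp: sgn_minus split: control.splits simp del: sgn_0_0)
      then have bb: "\<beta> u1 * \<beta> u2 > 0"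
        by (metis linorder_neqE_linordered_idom mult_neg_neg mult_pos_pos sgn_1_neg sgn_1_pos sgn_neg sgn_pos)
      have "(\<sigma> * S u1) * (\<sigma> * S u2) > 0" using Spos[OF u1] Spos[OF u2] by simp
      moreover have "(\<sigma> * S u1) * (\<sigma> * S u2) = (\<sigma> * \<sigma>) * (S u1 * S u2)" by (simp add: algebra_simps)
      moreover have "\<sigma> * \<sigma> > 0" using Spos[OF u1] by (metis mult_eq_0_iff not_real_square_gt_zero less_irrefl)
      ultimately have ss2: "S u1 * S u2 > 0" using zero_less_mult_pos by metis
      have "xs' u1 $ j * xs' u2 $ j = ((\<beta> u1 * \<beta> u2) * (S u1 * S u2)) / (d u1 * d u2)"
        using xj[OF u1] xj[OF u2] by (simp add: algebra_simps)
      then show ?thesis using bb ss2 dd by simp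
    qed
    show "\<not> quasi_adaptive_on I xs' j \<and> \<not> biphasic_on I xs' j"
      unfolding quasi_adaptive_on_def biphasic_on_def
      using prod_pos by (metis less_irrefl mult_zero_left not_less_iff_gr_or_eq)
  qed
qed

end
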